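(* For every integer $n\ge 1$, $$\sum_{\pi\in \mathcal I^C_{2n}(321)}q^{\mathrm{des}(\pi)}=(1+q)^n.$$
   Context: A permutation $\pi\in\mathcal S_m$ is centrosymmetric if $\pi(i)+\pi(m+1-i)=m+1$ for all $i$. $\mathcal I^C_m(321)$ is the set of centrosymmetric involutions in $\mathcal S_m$ avoiding the pattern $321$. $\mathrm{des}(\pi)$ is the number of positions $i\in\{1,\dots,m-1\}$ with $\pi(i)>\pi(i+1)$. *)

theory Defs
  imports "HOL-Combinatorics.Permutations"
begin

definition centrosymmetric :: "nat \<Rightarrow> (nat \<Rightarrow> nat) \<Rightarrow> bool" where
  "centrosymmetric m p \<longleftrightarrow> (\<forall>i\<in>{1..m}. p i + p (m + 1 - i) = m + 1)"

definition involution :: "(nat \<Rightarrow> nat) \<Rightarrow> bool" where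
  "involution p \<longleftrightarrow> p \<circ> p = id"

definition avoids321 :: "nat \<Rightarrow> (nat \<Rightarrow> nat) \<Rightarrow> bool" where
  "avoids321 m p \<longleftrightarrow> \<not> (\<exists>i j k. 1 \<le> i \<and> i < j \<and> j < k \<and> k \<le> m \<and> p i > p j \<and> p j > p k)"

definition cent_inv_321 :: "nat \<Rightarrow> (nat \<Rightarrow> nat) set" where
  "cent_inv_321 m = {p. p permutes {1..m} \<and> involution p \<and> centrosymmetric m p \<and> avoids321 m p}"

definition des :: "nat \<Rightarrow> (nat \<Rightarrow> nat) \<Rightarrow> nat" where
  "des m p = card {i. 1 \<le> i \<and> i \<le> m - 1 \<and> p i > p (i + 1)}"

end

theory Submission
  imports Defs
begin


datatype st = U | D | F

fun mir :: "st \<Rightarrow> st" where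
  "mir U = D" | "mir D = U" | "mir F = F"

lemma mir_mir[simp]: "mir (mir x) = x" by (cases x) auto
lemma mir_eq_iff: "mir x = y \<longleftrightarrow> x = mir y" by (cases x; cases y) auto

fun lvl :: "st list \<Rightarrow> int" where
  "lvl [] = 0" | "lvl (U#r) = lvl r + 1" | "lvl (D#r) = lvl r - 1" | "lvl (F#r) = lvl r"

fun valid :: "st list \<Rightarrow> bool" where
  "valid [] = True"
| "valid (x#r) = (valid r \<and> (x = F \<longrightarrow> lvl r = 0) \<and> (x = D \<longrightarrow> lvl r > 0))"

definition lastU :: "st list \<Rightarrow> bool" where "lastU r = (r \<noteq> [] \<and> hd r = U)"

fun pk :: "st list \<Rightarrow> nat" where
  "pk [] = 0" | "pk (x#r) = pk r + (if x = D \<and> lastU r then 1 else 0)"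

definition wt :: "st list \<Rightarrow> nat" where "wt r = 2 * pk r + (if lastU r then 1 else 0)"

definition W :: "nat \<Rightarrow> st list set" where "W n = {r. length r = n \<and> valid r}"

definition nu :: "st list \<Rightarrow> st" where "nu r = (if lvl r = 0 then F else D)"

lemma valid_lvl: "valid r \<Longrightarrow> lvl r \<ge> 0"
proof (induction r)
  case (Cons x r) then show ?case by (cases x) auto
qed simp

lemma valid_lastU: "valid r \<Longrightarrow> lastU r \<Longrightarrow> lvl r > 0"
  by (cases r) (auto simp: lastU_def dest: valid_lvl)

lemma W_Suc: "W (Suc n) = (\<lambda>r. U#r) ` W n \<union> (\<lambda>r. nu r # r) ` W n"
proof (intro equalityI subsetI)
  fix r' assume "r' \<in> W (Suc n)"
  then obtain x r where r': "r' = x # r" and r: "r \<in> W n" "valid (x#r)"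
    by (cases r') (auto simp: W_def)
  show "r' \<in> (\<lambda>r. U#r) ` W n \<union> (\<lambda>r. nu r # r) ` W n"
  proof (cases x)
    case U then show ?thesis using r r' by auto
  next
    case D then have "x = nu r" using r by (auto simp: nu_def)
    then show ?thesis using r r' by auto
  next
    case F then have "x = nu r" using r by (auto simp: nu_def)
    then show ?thesis using r r' by auto
  qed
next
  fix r' assume "r' \<in> (\<lambda>r. U#r) ` W n \<union> (\<lambda>r. nu r # r) ` W n"
  then show "r' \<in> W (Suc n)"
    by (auto simp: W_def nu_def dest: valid_lvl) (smt (verit) valid_lvl)
qed

lemma finite_W: "finite (W n)"
proof -
  have "W n \<subseteq> {xs. set xs \<subseteq> {U,D,F} \<and> length xs = n}"
    by (auto simp: W_def) (metis st.exhaust)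
  moreover have "finite {xs. set xs \<subseteq> {U,D,F} \<and> length xs = n}"
    by (rule finite_lists_length_eq) simp
  ultimately show ?thesis by (rule finite_subset)
qed

lemma sum_W_Suc:
  fixes f :: "st list \<Rightarrow> 'a::comm_monoid_add"
  shows "(\<Sum>r\<in>W (Suc n). f r) = (\<Sum>r\<in>W n. f (U#r)) + (\<Sum>r\<in>W n. f (nu r # r))"
proof -
  have disj: "(\<lambda>r. U#r) ` W n \<inter> (\<lambda>r. nu r # r) ` W n = {}"
    by (auto simp: nu_def split: if_splits)
  have "(\<Sum>r\<in>W (Suc n). f r) = (\<Sum>r\<in>(\<lambda>r. U#r) ` W n. f r) + (\<Sum>r\<in>(\<lambda>r. nu r # r) ` W n. f r)"
    unfolding W_Suc by (rule sum.union_disjoint) (auto simp: finite_W disj)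
  also have "\<dots> = (\<Sum>r\<in>W n. f (U#r)) + (\<Sum>r\<in>W n. f (nu r # r))"
    by (subst sum.reindex, simp add: inj_on_def, subst sum.reindex, simp add: inj_on_def, simp)
  finally show ?thesis .
qed

lemma W_0: "W 0 = {[]}" by (auto simp: W_def)

lemma count_W:
  fixes q :: "'a::comm_ring_1"
  shows "(\<Sum>r\<in>W n. q ^ wt r) = (1 + q) ^ n"
proof -
  define a where "a n = (\<Sum>r\<in>W n. if lastU r then q ^ (2 * pk r) else 0)" for n
  define b where "b n = (\<Sum>r\<in>W n. if lastU r then 0 else q ^ (2 * pk r))" for n
  have T: "(\<Sum>r\<in>W n. q ^ wt r) = q * a n + b n" for n
    unfolding a_def b_def sum_distrib_left sum.distrib[symmetric]
    by (rule sum.cong) (auto simp: wt_def power_add mult.commute)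
  have a: "a (Suc n) = a n + b n" for n
    unfolding a_def b_def sum_W_Suc sum.distrib[symmetric]
    by (auto simp: lastU_def nu_def intro!: sum.cong)
  have b: "b (Suc n) = q^2 * a n + b n" for n
  proof -
    have "b (Suc n) = (\<Sum>r\<in>W n. q ^ (2 * pk (nu r # r)))"
      unfolding b_def sum_W_Suc by (auto simp: lastU_def nu_def intro!: sum.cong)
    also have "\<dots> = (\<Sum>r\<in>W n. q^2 * (if lastU r then q ^ (2 * pk r) else 0) + (if lastU r then 0 else q ^ (2 * pk r)))"
    proof (rule sum.cong)
      fix r assume "r \<in> W n"
      then have "valid r" by (simp add: W_def)
      then show "q ^ (2 * pk (nu r # r)) = q^2 * (if lastU r then q ^ (2 * pk r) else 0) + (if lastU r then 0 else q ^ (2 * pk r))"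
        using valid_lastU[of r] by (auto simp: nu_def power_add power_mult mult.commute)
    qed simp
    also have "\<dots> = q^2 * a n + b n"
      unfolding a_def b_def sum.distrib sum_distrib_left by simp
    finally show ?thesis .
  qed
  have "q * a n + b n = (1 + q) ^ n"
  proof (induction n)
    case 0 then show ?case by (simp add: a_def b_def W_0 lastU_def)
  next
    case (Suc n)
    have "q * a (Suc n) + b (Suc n) = (1 + q) * (q * a n + b n)"
      unfolding a b by (simp add: algebra_simps power2_eq_square)
    then show ?case using Suc by simp
  qed
  then show ?thesis using T by simp
qed



fun wd :: "(nat \<Rightarrow> st) \<Rightarrow> nat \<Rightarrow> st list" where
  "wd h 0 = []" | "wd h (Suc k) = h (Suc k) # wd h k"

fun cnt :: "(nat \<Rightarrow> st) \<Rightarrow> st \<Rightarrow> nat \<Rightarrow> nat" where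
  "cnt h x 0 = 0" | "cnt h x (Suc k) = cnt h x k + (if h (Suc k) = x then 1 else 0)"

definition lv :: "(nat \<Rightarrow> st) \<Rightarrow> nat \<Rightarrow> int" where
  "lv h k = int (cnt h U k) - int (cnt h D k)"

lemma lv_0[simp]: "lv h 0 = 0" by (simp add: lv_def)

lemma lv_Suc: "lv h (Suc k) = lv h k + (if h (Suc k) = U then 1 else if h (Suc k) = D then -1 else 0)"
  by (cases "h (Suc k)") (auto simp: lv_def)

lemma lvl_wd: "lvl (wd h k) = lv h k"
proof (induction k)
  case (Suc k) then show ?case by (cases "h (Suc k)") (auto simp: lv_Suc)
qed simp

lemma valid_wd: "valid (wd h k) \<longleftrightarrow> (\<forall>i\<le>k. lv h i \<ge> 0) \<and> (\<forall>i. 1 \<le> i \<longrightarrow> i \<le> k \<longrightarrow> h i = F \<longrightarrow> lv h i = 0)"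
proof (induction k)
  case 0 then show ?case by simp
next
  case (Suc k)
  have e1: "(\<forall>i\<le>Suc k. lv h i \<ge> 0) \<longleftrightarrow> (\<forall>i\<le>k. lv h i \<ge> 0) \<and> lv h (Suc k) \<ge> 0"
    using le_Suc_eq by auto
  have e2: "(\<forall>i. 1 \<le> i \<longrightarrow> i \<le> Suc k \<longrightarrow> h i = F \<longrightarrow> lv h i = 0) \<longleftrightarrow>
     (\<forall>i. 1 \<le> i \<longrightarrow> i \<le> k \<longrightarrow> h i = F \<longrightarrow> lv h i = 0) \<and> (h (Suc k) = F \<longrightarrow> lv h (Suc k) = 0)"
    using le_Suc_eq by auto
  show ?case unfolding e1 e2 wd.simps valid.simps Suc lvl_wd
    by (cases "h (Suc k)") (auto simp: lv_Suc)
qed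

lemma wd_cong: "(\<And>i. 1 \<le> i \<Longrightarrow> i \<le> k \<Longrightarrow> h i = h' i) \<Longrightarrow> wd h k = wd h' k"
  by (induction k) auto

lemma cnt_cong: "(\<And>i. 1 \<le> i \<Longrightarrow> i \<le> k \<Longrightarrow> h i = h' i) \<Longrightarrow> cnt h x k = cnt h' x k"
  by (induction k) auto

lemma wd_inj: "wd h k = wd h' k \<Longrightarrow> 1 \<le> i \<Longrightarrow> i \<le> k \<Longrightarrow> h i = h' i"
  by (induction k) (auto simp: le_Suc_eq)

lemma length_wd[simp]: "length (wd h k) = k"
  by (induction k) auto

lemma lastU_wd: "lastU (wd h k) \<longleftrightarrow> (1 \<le> k \<and> h k = U)"
  by (cases k) (auto simp: lastU_def)

lemma pk_wd: "pk (wd h k) = card {i. 1 \<le> i \<and> Suc i \<le> k \<and> h i = U \<and> h (Suc i) = D}"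
proof (induction k)
  case 0 then show ?case by simp
next
  case (Suc k)
  let ?S = "\<lambda>k. {i. 1 \<le> i \<and> Suc i \<le> k \<and> h i = U \<and> h (Suc i) = D}"
  have fin: "finite (?S k)" by (rule finite_subset[of _ "{..k}"]) auto
  have "?S (Suc k) = ?S k \<union> (if 1 \<le> k \<and> h k = U \<and> h (Suc k) = D then {k} else {})"
    by (auto simp: le_Suc_eq)
  moreover have "k \<notin> ?S k" by auto
  ultimately have "card (?S (Suc k)) = card (?S k) + (if 1 \<le> k \<and> h k = U \<and> h (Suc k) = D then 1 else 0)"
    using fin by auto
  then show ?case using Suc by (simp add: lastU_wd)
qed

lemma cnt_mono: "k \<le> k' \<Longrightarrow> cnt h x k \<le> cnt h x k'"
proof (induction k' rule: dec_induct)
  case (step n) then show ?case by simp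
qed simp

lemma cnt_strict: "k < k' \<Longrightarrow> h k' = x \<Longrightarrow> cnt h x k < cnt h x k'"
proof -
  assume "k < k'" "h k' = x"
  then obtain k'' where k'': "k' = Suc k''" "k \<le> k''" by (cases k') auto
  then show ?thesis using cnt_mono[of k k'' h x] \<open>h k' = x\<close> by simp
qed

lemma cnt_card: "cnt h x k = card {i. 1 \<le> i \<and> i \<le> k \<and> h i = x}"
proof (induction k)
  case 0 then show ?case by simp
next
  case (Suc k)
  have fin: "finite {i. 1 \<le> i \<and> i \<le> k \<and> h i = x}" by (rule finite_subset[of _ "{..k}"]) auto
  have "{i. 1 \<le> i \<and> i \<le> Suc k \<and> h i = x} = {i. 1 \<le> i \<and> i \<le> k \<and> h i = x} \<union> (if h (Suc k) = x then {Suc k} else {})"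
    by (auto simp: le_Suc_eq)
  then show ?case using Suc fin by auto
qed

definition sg :: "(nat \<Rightarrow> nat) \<Rightarrow> nat \<Rightarrow> st" where
  "sg p i = (if p i > i then U else if p i < i then D else F)"

lemma sg_U: "sg p i = U \<longleftrightarrow> p i > i" by (simp add: sg_def)
lemma sg_D: "sg p i = D \<longleftrightarrow> p i < i" by (simp add: sg_def)
lemma sg_F: "sg p i = F \<longleftrightarrow> p i = i" by (auto simp: sg_def)

locale pinv =
  fixes m :: nat and p :: "nat \<Rightarrow> nat"
  assumes perm: "p permutes {1..m}" and inv: "involution p" and av: "avoids321 m p"
begin

lemma pp[simp]: "p (p i) = i"
  using inv unfolding involution_def by (metis comp_apply id_apply)

lemma inr: "p i \<noteq> i \<Longrightarrow> 1 \<le> i \<and> i \<le> m \<and> 1 \<le> p i \<and> p i \<le> m"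
  using perm permutes_not_in[OF perm] permutes_in_image[OF perm] by fastforce

lemma no321: "1 \<le> i \<Longrightarrow> i < j \<Longrightarrow> j < k \<Longrightarrow> k \<le> m \<Longrightarrow> p i > p j \<Longrightarrow> p j > p k \<Longrightarrow> False"
  using av unfolding avoids321_def by blast

lemma pinj: "p i = p j \<Longrightarrow> i = j" by (metis pp)

lemma F1: "i < j \<Longrightarrow> p i > i \<Longrightarrow> p j > j \<Longrightarrow> p i < p j"
proof (rule ccontr)
  assume a: "i < j" "p i > i" "p j > j" "\<not> p i < p j"
  then have "p i > p j" using pinj by (metis nat_neq_iff)
  then show False using no321[of i j "p j"] a inr[of i] inr[of j] by auto
qed

lemma F2: "i < j \<Longrightarrow> p i < i \<Longrightarrow> p j < j \<Longrightarrow> p i < p j"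
proof (rule ccontr)
  assume a: "i < j" "p i < i" "p j < j" "\<not> p i < p j"
  then have "p i > p j" using pinj by (metis nat_neq_iff)
  then show False using no321[of "p j" "p i" i] a inr[of i] inr[of j] by auto
qed

lemma F3: "p i > i \<Longrightarrow> i < f \<Longrightarrow> p f = f \<Longrightarrow> p i < f"
proof (rule ccontr)
  assume a: "p i > i" "i < f" "p f = f" "\<not> p i < f"
  then have "p i \<noteq> f" by (metis pp nat_neq_iff)
  then have "p i > f" using a by simp
  then show False using no321[of i f "p i"] a inr[of i] by auto
qed

lemma F4: "p i < i \<Longrightarrow> f < i \<Longrightarrow> p f = f \<Longrightarrow> p i > f"
proof (rule ccontr)
  assume a: "p i < i" "f < i" "p f = f" "\<not> p i > f"
  then have "p i \<noteq> f" by (metis pp)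
  then have "p i < f" using a by simp
  then show False using F3[of "p i" f] a by simp
qed

lemma nonneg: "cnt (sg p) D k \<le> cnt (sg p) U k"
proof -
  have "card {i. 1 \<le> i \<and> i \<le> k \<and> sg p i = D} \<le> card {i. 1 \<le> i \<and> i \<le> k \<and> sg p i = U}"
  proof (rule card_inj_on_le[of p])
    show "inj_on p {i. 1 \<le> i \<and> i \<le> k \<and> sg p i = D}" by (meson inj_onI pinj)
    show "p ` {i. 1 \<le> i \<and> i \<le> k \<and> sg p i = D} \<subseteq> {i. 1 \<le> i \<and> i \<le> k \<and> sg p i = U}"
      using inr by (force simp: sg_U sg_D)
    show "finite {i. 1 \<le> i \<and> i \<le> k \<and> sg p i = U}" by (rule finite_subset[of _ "{..k}"]) auto
  qed
  then show ?thesis by (simp add: cnt_card)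
qed

lemma flevel: "p f = f \<Longrightarrow> cnt (sg p) U f \<le> cnt (sg p) D f"
proof -
  assume f: "p f = f"
  have "card {i. 1 \<le> i \<and> i \<le> f \<and> sg p i = U} \<le> card {i. 1 \<le> i \<and> i \<le> f \<and> sg p i = D}"
  proof (rule card_inj_on_le[of p])
    show "inj_on p {i. 1 \<le> i \<and> i \<le> f \<and> sg p i = U}" by (meson inj_onI pinj)
    show "p ` {i. 1 \<le> i \<and> i \<le> f \<and> sg p i = U} \<subseteq> {i. 1 \<le> i \<and> i \<le> f \<and> sg p i = D}"
    proof
      fix y assume "y \<in> p ` {i. 1 \<le> i \<and> i \<le> f \<and> sg p i = U}"
      then obtain i where i: "y = p i" "1 \<le> i" "i \<le> f" "p i > i" by (auto simp: sg_U)
      have "i \<noteq> f" using i f by auto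
      then have "p i < f" using F3[of i f] i f by simp
      then show "y \<in> {i. 1 \<le> i \<and> i \<le> f \<and> sg p i = D}" using i inr[of i] by (auto simp: sg_D)
    qed
    show "finite {i. 1 \<le> i \<and> i \<le> f \<and> sg p i = D}" by (rule finite_subset[of _ "{..f}"]) auto
  qed
  then show ?thesis by (simp add: cnt_card)
qed

lemma valid_sg: "valid (wd (sg p) k)"
  unfolding valid_wd lv_def using nonneg flevel
  by (auto simp: sg_F) (metis of_nat_le_iff antisym)

lemma desc: "1 \<le> i \<Longrightarrow> Suc i \<le> m \<Longrightarrow> (p i > p (Suc i) \<longleftrightarrow> sg p i = U \<and> sg p (Suc i) = D)"
proof
  assume i: "1 \<le> i" "Suc i \<le> m" and d: "p i > p (Suc i)"
  show "sg p i = U \<and> sg p (Suc i) = D"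
  proof (cases "p i > i")
    case True
    have "\<not> p (Suc i) > Suc i" using F1[of i "Suc i"] True d by auto
    moreover have "p (Suc i) \<noteq> Suc i" using F3[of i "Suc i"] True d by auto
    ultimately show ?thesis using True by (auto simp: sg_U sg_D)
  next
    case False
    show ?thesis
    proof (cases "p i = i")
      case True
      then show ?thesis using F4[of "Suc i" i] d by auto
    next
      case False2: False
      then have "p i < i" using False by simp
      then show ?thesis using F2[of i "Suc i"] d by auto
    qed
  qed
next
  assume "sg p i = U \<and> sg p (Suc i) = D"
  then show "p i > p (Suc i)" by (auto simp: sg_U sg_D)
qed

end



lemma uniq_aux:
  assumes P: "pinv m p" and S: "pinv m s" and sgeq: "\<And>k. sg p k = sg s k"
    and IH: "\<And>k. k < i \<Longrightarrow> p k > k \<Longrightarrow> p k = s k"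
    and i: "p i > i" and lt: "p i < s i"
  shows False
proof -
  interpret P: pinv m p by (rule P)
  interpret S: pinv m s by (rule S)
  define j where "j = p i"
  have "p j < j" using i by (simp add: j_def)
  then have sj: "s j < j" using sgeq[of j] by (metis sg_D)
  define i' where "i' = s j"
  have si': "s i' = j" by (simp add: i'_def)
  then have "s i' > i'" using sj by (simp add: i'_def)
  then have pi': "p i' > i'" using sgeq[of i'] by (metis sg_U)
  have si: "s i > i" using sgeq[of i] i by (metis sg_U)
  consider "i' < i" | "i' = i" | "i' > i" by linarith
  then show False
  proof cases
    case 1 then have "p i' = s i'" using IH pi' by blast
    then have "p i' = p i" using si' j_def by simp
    then have "i' = i" using P.pinj by blast
    then show False using 1 by simp
  next
    case 2 then show False using si' lt j_def by simp
  next
    case 3 then have "s i < s i'" using S.F1[of i i'] si \<open>s i' > i'\<close> by simp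
    then show False using si' lt j_def by simp
  qed
qed

lemma uniq:
  assumes P: "pinv m p" and S: "pinv m s" and sgeq: "\<And>k. sg p k = sg s k"
  shows "p = s"
proof -
  interpret P: pinv m p by (rule P)
  interpret S: pinv m s by (rule S)
  have U: "p i > i \<Longrightarrow> p i = s i" for i
  proof (induction i rule: less_induct)
    case (less i)
    show ?case
    proof (rule ccontr)
      assume ne: "p i \<noteq> s i"
      show False
      proof (cases "p i < s i")
        case True then show False using uniq_aux[OF P S sgeq, of i] less by blast
      next
        case False
        then have lt: "s i < p i" using ne by simp
        have si: "s i > i" using sgeq[of i] less by (metis sg_U)
        have IH': "s k = p k" if "k < i" "s k > k" for k
          using less.IH[of k] that sgeq[of k] by (metis sg_U)
        show False using uniq_aux[OF S P _ IH' si lt] sgeq by metis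
      qed
    qed
  qed
  show ?thesis
  proof
    fix i
    consider "p i > i" | "p i < i" | "p i = i" by linarith
    then show "p i = s i"
    proof cases
      case 1 then show ?thesis using U by blast
    next
      case 2
      then have "p (p i) > p i" by simp
      then have "s (p i) = i" using U[of "p i"] by simp
      then show ?thesis by (metis S.pp)
    next
      case 3 then show ?thesis using sgeq[of i] by (metis sg_F)
    qed
  qed
qed

lemma pk_sym:
  fixes h :: "nat \<Rightarrow> st"
  assumes sym: "\<And>i. 1 \<le> i \<Longrightarrow> i \<le> 2*n \<Longrightarrow> h (2*n+1-i) = mir (h i)" and n: "n \<ge> 1"
  shows "card {i. 1 \<le> i \<and> Suc i \<le> 2*n \<and> h i = U \<and> h (Suc i) = D}
       = 2 * card {i. 1 \<le> i \<and> Suc i \<le> n \<and> h i = U \<and> h (Suc i) = D} + (if h n = U then 1 else 0)"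
proof -
  let ?Q = "\<lambda>i. h i = U \<and> h (Suc i) = D"
  define S1 where "S1 = {i. 1 \<le> i \<and> Suc i \<le> n \<and> ?Q i}"
  define M where "M = (if h n = U then {n} else {})"
  define S3 where "S3 = {i. n+1 \<le> i \<and> Suc i \<le> 2*n \<and> ?Q i}"
  have hn: "h (Suc n) = mir (h n)" using sym[of n] n by (simp add: numeral_2_eq_2)
  have split: "{i. 1 \<le> i \<and> Suc i \<le> 2*n \<and> ?Q i} = S1 \<union> M \<union> S3"
    unfolding S1_def M_def S3_def using n hn
    by (auto simp: mir_eq_iff) (metis le_antisym not_less_eq_eq)+
  have f1: "finite S1" unfolding S1_def by (rule finite_subset[of _ "{..n}"]) auto
  have f3: "finite S3" unfolding S3_def by (rule finite_subset[of _ "{..2*n}"]) auto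
  have fM: "finite M" by (simp add: M_def)
  have bij: "bij_betw (\<lambda>i. 2*n - i) S1 S3"
  proof (rule bij_betw_byWitness[where f' = "\<lambda>i. 2*n - i"])
    show "\<forall>a\<in>S1. 2 * n - (2 * n - a) = a" by (auto simp: S1_def)
    show "\<forall>a\<in>S3. 2 * n - (2 * n - a) = a" by (auto simp: S3_def)
    show "(\<lambda>i. 2 * n - i) ` S1 \<subseteq> S3"
    proof
      fix y assume "y \<in> (\<lambda>i. 2 * n - i) ` S1"
      then obtain i where i: "y = 2*n - i" "1 \<le> i" "Suc i \<le> n" "h i = U" "h (Suc i) = D"
        by (auto simp: S1_def)
      have a: "h (2*n+1 - Suc i) = U" using sym[of "Suc i"] i by simp
      have b: "h (2*n+1 - i) = D" using sym[of i] i by simp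
      have "2*n+1 - Suc i = y" "2*n+1-i = Suc y" using i by auto
      then show "y \<in> S3" using a b i by (auto simp: S3_def)
    qed
    show "(\<lambda>i. 2 * n - i) ` S3 \<subseteq> S1"
    proof
      fix y assume "y \<in> (\<lambda>i. 2 * n - i) ` S3"
      then obtain i where i: "y = 2*n - i" "n+1 \<le> i" "Suc i \<le> 2*n" "h i = U" "h (Suc i) = D"
        by (auto simp: S3_def)
      have a: "h (2*n+1 - Suc i) = U" using sym[of "Suc i"] i by simp
      have b: "h (2*n+1 - i) = D" using sym[of i] i by simp
      have "2*n+1 - Suc i = y" "2*n+1-i = Suc y" using i by auto
      then show "y \<in> S1" using a b i by (auto simp: S1_def)
    qed
  qed
  have c3: "card S3 = card S1" using bij_betw_same_card[OF bij] by simp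
  have d1: "S1 \<inter> M = {}" by (auto simp: S1_def M_def)
  have d2: "(S1 \<union> M) \<inter> S3 = {}" using n by (auto simp: S1_def M_def S3_def)
  have "card (S1 \<union> M \<union> S3) = card S1 + card M + card S3"
    using d1 d2 f1 f3 fM by (simp add: card_Un_disjoint)
  then show ?thesis unfolding split S1_def[symmetric] using c3 by (simp add: M_def)
qed



lemma cnt_uniq: "h j = x \<Longrightarrow> h j' = x \<Longrightarrow> cnt h x j = cnt h x j' \<Longrightarrow> j = j'"
  using cnt_strict[of j j' h x] cnt_strict[of j' j h x] by (metis nat_neq_iff less_irrefl)

definition mate :: "nat \<Rightarrow> (nat \<Rightarrow> st) \<Rightarrow> nat \<Rightarrow> nat" where
  "mate m w i = (if 1 \<le> i \<and> i \<le> m then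
     (if w i = U then LEAST j. cnt w U i \<le> cnt w D j
      else if w i = D then LEAST j. cnt w D i \<le> cnt w U j else i) else i)"

locale goodw =
  fixes m :: nat and w :: "nat \<Rightarrow> st"
  assumes G1: "\<And>i. i \<le> m \<Longrightarrow> lv w i \<ge> 0"
    and G2: "\<And>i. 1 \<le> i \<Longrightarrow> i \<le> m \<Longrightarrow> w i = F \<Longrightarrow> lv w i = 0"
    and G3: "cnt w U m = cnt w D m"
begin

abbreviation "mt \<equiv> mate m w"

lemma M1:
  assumes i: "1 \<le> i" "i \<le> m" "w i = U"
  shows "1 \<le> mt i \<and> mt i \<le> m \<and> w (mt i) = D \<and> cnt w D (mt i) = cnt w U i \<and> i < mt i"
proof -
  define c where "c = cnt w U i"
  have c1: "c \<ge> 1" using cnt_strict[of 0 i w U] i by (simp add: c_def)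
  define j where "j = (LEAST j. c \<le> cnt w D j)"
  have mtj: "mt i = j" using i by (simp add: mate_def j_def c_def)
  have ex: "c \<le> cnt w D m" using cnt_mono[of i m w U] i G3 by (simp add: c_def)
  have jm: "j \<le> m" unfolding j_def by (rule Least_le) (rule ex)
  have cj: "c \<le> cnt w D j" unfolding j_def by (rule LeastI) (rule ex)
  have "j \<noteq> 0"
  proof
    assume "j = 0" then show False using cj c1 by simp
  qed
  then obtain j0 where j0: "j = Suc j0" by (cases j) auto
  have "\<not> c \<le> cnt w D j0" using not_less_Least[of j0 "\<lambda>j. c \<le> cnt w D j"] j0 j_def by simp
  then have wj: "w j = D" and cdj: "cnt w D j = c" using cj j0 by (auto split: if_splits)
  have "i < j"
  proof (rule ccontr)
    assume "\<not> i < j"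
    then have "cnt w D j \<le> cnt w D i" using cnt_mono by simp
    then have "lv w i \<le> 0" using cdj by (simp add: lv_def c_def)
    moreover obtain i0 where i0: "i = Suc i0" using i by (cases i) auto
    moreover have "lv w i0 \<ge> 0" using G1[of i0] i i0 by simp
    ultimately show False using lv_Suc[of w i0] i by simp
  qed
  then show ?thesis using mtj jm wj cdj j0 c_def by simp
qed

lemma M2:
  assumes i: "1 \<le> i" "i \<le> m" "w i = D"
  shows "1 \<le> mt i \<and> mt i \<le> m \<and> w (mt i) = U \<and> cnt w U (mt i) = cnt w D i \<and> mt i < i"
proof -
  define c where "c = cnt w D i"
  have c1: "c \<ge> 1" using cnt_strict[of 0 i w D] i by (simp add: c_def)
  define j where "j = (LEAST j. c \<le> cnt w U j)"
  have mtj: "mt i = j" using i by (simp add: mate_def j_def c_def)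
  have ex: "c \<le> cnt w U i" using G1[of i] i by (simp add: c_def lv_def)
  have ji: "j \<le> i" unfolding j_def by (rule Least_le) (rule ex)
  have cj: "c \<le> cnt w U j" unfolding j_def by (rule LeastI) (rule ex)
  have "j \<noteq> 0"
  proof
    assume "j = 0" then show False using cj c1 by simp
  qed
  then obtain j0 where j0: "j = Suc j0" by (cases j) auto
  have "\<not> c \<le> cnt w U j0" using not_less_Least[of j0 "\<lambda>j. c \<le> cnt w U j"] j0 j_def by simp
  then have wj: "w j = U" and cdj: "cnt w U j = c" using cj j0 by (auto split: if_splits)
  have "j \<noteq> i" using wj i by auto
  then show ?thesis using mtj ji wj cdj j0 c_def i by simp
qed

lemma mt_out: "\<not> (1 \<le> i \<and> i \<le> m) \<Longrightarrow> mt i = i" unfolding mate_def by presburger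
lemma mt_F: "w i = F \<Longrightarrow> mt i = i" by (simp add: mate_def)

lemma mtmt[simp]: "mt (mt i) = i"
proof (cases "1 \<le> i \<and> i \<le> m")
  case False then show ?thesis by (simp add: mt_out)
next
  case True
  show ?thesis
  proof (cases "w i")
    case U
    have a: "1 \<le> mt i \<and> mt i \<le> m \<and> w (mt i) = D \<and> cnt w D (mt i) = cnt w U i" using M1 True U by blast
    then have "w (mt (mt i)) = U \<and> cnt w U (mt (mt i)) = cnt w U i" using M2[of "mt i"] by simp
    then show ?thesis using cnt_uniq[of w "mt (mt i)" U i] U by simp
  next
    case D
    have a: "1 \<le> mt i \<and> mt i \<le> m \<and> w (mt i) = U \<and> cnt w U (mt i) = cnt w D i" using M2 True D by blast
    then have "w (mt (mt i)) = D \<and> cnt w D (mt (mt i)) = cnt w D i" using M1[of "mt i"] by simp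
    then show ?thesis using cnt_uniq[of w "mt (mt i)" D i] D by simp
  next
    case F then show ?thesis by (simp add: mt_F)
  qed
qed

lemma mt_permutes: "mt permutes {1..m}"
  unfolding permutes_def
proof (intro conjI allI impI)
  fix x assume "x \<notin> {1..m}" then show "mt x = x" by (simp add: mt_out)
next
  fix y show "\<exists>!x. mt x = y"
    by (rule ex1I[of _ "mt y"]) (simp, metis mtmt)
qed

lemma mt_inv: "involution mt"
  unfolding involution_def by (simp add: fun_eq_iff)

lemma sg_mt: "1 \<le> i \<Longrightarrow> i \<le> m \<Longrightarrow> sg mt i = w i"
  using M1[of i] M2[of i] mt_F[of i] by (cases "w i") (auto simp: sg_def)

lemma incA: "1 \<le> i \<Longrightarrow> i < i' \<Longrightarrow> i' \<le> m \<Longrightarrow> w i \<noteq> D \<Longrightarrow> w i' \<noteq> D \<Longrightarrow> mt i < mt i'"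
proof -
  assume a: "1 \<le> i" "i < i'" "i' \<le> m" "w i \<noteq> D" "w i' \<noteq> D"
  show ?thesis
  proof (cases "w i")
    case U
    note m1 = M1[of i] a U
    show ?thesis
    proof (cases "w i'")
      case U
      note m1' = M1[of i'] a U
      have "cnt w U i < cnt w U i'" using cnt_strict[of i i' w U] a U by simp
      then have "cnt w D (mt i) < cnt w D (mt i')" using m1 m1' by simp
      then show ?thesis using cnt_mono[of "mt i'" "mt i" w D] by (meson not_le)
    next
      case D then show ?thesis using a by simp
    next
      case F
      have "mt i \<noteq> i'" using m1 F by auto
      moreover have "\<not> mt i > i'"
      proof
        assume "mt i > i'"
        then have "cnt w D i' < cnt w D (mt i)" using cnt_strict[of i' "mt i" w D] m1 by simp
        moreover have "cnt w U i \<le> cnt w U i'" using cnt_mono a by simp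
        ultimately have "lv w i' > 0" using m1 by (simp add: lv_def)
        then show False using G2[of i'] a F by simp
      qed
      ultimately show ?thesis using mt_F[OF F] by simp
    qed
  next
    case D then show ?thesis using a by simp
  next
    case F
    have "w i' = U \<or> w i' = F" using a by (cases "w i'") auto
    then show ?thesis using M1[of i'] a mt_F[OF F] mt_F[of i'] by auto
  qed
qed

lemma incB: "1 \<le> i \<Longrightarrow> i < i' \<Longrightarrow> i' \<le> m \<Longrightarrow> w i = D \<Longrightarrow> w i' = D \<Longrightarrow> mt i < mt i'"
proof -
  assume a: "1 \<le> i" "i < i'" "i' \<le> m" "w i = D" "w i' = D"
  have "cnt w D i < cnt w D i'" using cnt_strict[of i i' w D] a by simp
  then have "cnt w U (mt i) < cnt w U (mt i')" using M2[of i] M2[of i'] a by simp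
  then show ?thesis using cnt_mono[of "mt i'" "mt i" w U] by (meson not_le)
qed

lemma mt_avoids: "avoids321 m mt"
  unfolding avoids321_def
proof
  assume "\<exists>i j k. 1 \<le> i \<and> i < j \<and> j < k \<and> k \<le> m \<and> mt i > mt j \<and> mt j > mt k"
  then obtain i j k where a: "1 \<le> i" "i < j" "j < k" "k \<le> m" "mt i > mt j" "mt j > mt k" by blast
  show False
    using incA[of i j] incA[of j k] incA[of i k] incB[of i j] incB[of j k] incB[of i k] a
    by (cases "w i = D"; cases "w j = D"; cases "w k = D") auto
qed

lemma mt_pinv: "pinv m mt"
  by unfold_locales (rule mt_permutes, rule mt_inv, rule mt_avoids)

end



lemma cnt_sym:
  assumes sym: "\<And>i. 1 \<le> i \<Longrightarrow> i \<le> m \<Longrightarrow> w (m+1-i) = mir (w i)"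
  shows "k \<le> m \<Longrightarrow> cnt w x (m-k) + cnt w (mir x) k = cnt w x m"
proof (induction k)
  case 0 then show ?case by simp
next
  case (Suc k)
  have e: "m - k = Suc (m - Suc k)" using Suc.prems by simp
  have "w (m - k) = mir (w (Suc k))" using sym[of "Suc k"] Suc.prems by simp
  then have "(w (m - k) = x) = (w (Suc k) = mir x)" by (metis mir_eq_iff)
  then have c: "(if w (m - k) = x then 1 else 0) = (if w (Suc k) = mir x then 1 else (0::nat))" by simp
  have a: "cnt w x (m-k) = cnt w x (m - Suc k) + (if w (m-k) = x then 1 else 0)"
    unfolding e by simp
  have IH: "cnt w x (m - k) + cnt w (mir x) k = cnt w x m" using Suc.IH Suc.prems by simp
  show ?case using IH a c by simp
qed



lemma (in goodw) centro:
  assumes sym: "\<And>i. 1 \<le> i \<Longrightarrow> i \<le> m \<Longrightarrow> w (m+1-i) = mir (w i)"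
  shows "centrosymmetric m mt"
proof -
  have Ucase: "mt i + mt (m+1-i) = m+1" if i: "1 \<le> i" "i \<le> m" "w i = U" for i
  proof -
    define j where "j = mt i"
    have j: "1 \<le> j" "j \<le> m" "w j = D" "cnt w D j = cnt w U i" using M1[OF i] by (simp_all add: j_def)
    define i' where "i' = m+1-i"
    have i': "1 \<le> i'" "i' \<le> m" "w i' = D" using sym[of i] i by (simp_all add: i'_def)
    have m2: "w (mt i') = U" "cnt w U (mt i') = cnt w D i'" using M2[OF i'] by simp_all
    have wj': "w (m+1-j) = U" using sym[of j] j by simp
    have s1: "cnt w U (m-(j-1)) + cnt w D (j-1) = cnt w U m" using cnt_sym[of m w, OF sym, of "j-1" U] j by simp
    have s2: "cnt w D (m-(i-1)) + cnt w U (i-1) = cnt w D m" using cnt_sym[of m w, OF sym, of "i-1" D] i by simp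
    have c1: "cnt w D j = cnt w D (j-1) + 1" using j cnt.simps(2)[of w D "j-1"] by simp
    have c2: "cnt w U i = cnt w U (i-1) + 1" using i cnt.simps(2)[of w U "i-1"] by simp
    have e1: "m-(j-1) = m+1-j" "m-(i-1) = m+1-i" using i j by auto
    have "cnt w U (m+1-j) = cnt w D i'"
      using s1 s2 c1 c2 G3 j(4) unfolding i'_def e1 by linarith
    then have "mt i' = m+1-j" using cnt_uniq[of w "mt i'" U "m+1-j"] m2 wj' by simp
    then show ?thesis using j unfolding i'_def j_def by simp
  qed
  show ?thesis unfolding centrosymmetric_def
  proof
    fix i assume "i \<in> {1..m}"
    then have i: "1 \<le> i" "i \<le> m" by auto
    show "mt i + mt (m + 1 - i) = m + 1"
    proof (cases "w i")
      case U then show ?thesis using \<open>i \<in> {1..m}\<close> using Ucase[of i] i by simp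
    next
      case D
      have "w (m+1-i) = U" using sym[of i] i D by simp
      then have "mt (m+1-i) + mt (m+1-(m+1-i)) = m+1" using Ucase[of "m+1-i"] i by simp
      then show ?thesis using i by simp
    next
      case F
      have "w (m+1-i) = F" using sym[of i] i F by simp
      then show ?thesis using mt_F F i by simp
    qed
  qed
qed

definition hw :: "nat \<Rightarrow> st list \<Rightarrow> nat \<Rightarrow> st" where "hw n r i = r ! (n - i)"
definition full :: "nat \<Rightarrow> st list \<Rightarrow> nat \<Rightarrow> st" where
  "full n r i = (if i \<le> n then hw n r i else mir (hw n r (2*n+1-i)))"

lemma wd_hw: "length r = n \<Longrightarrow> k \<le> n \<Longrightarrow> wd (hw n r) k = drop (n-k) r"
proof (induction k)
  case 0 then show ?case by simp
next
  case (Suc k)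
  have "n - k = Suc (n - Suc k)" using Suc.prems by simp
  then show ?case using Suc Cons_nth_drop_Suc[of "n - Suc k" r] by (simp add: hw_def)
qed

lemma full_sym: "1 \<le> i \<Longrightarrow> i \<le> 2*n \<Longrightarrow> full n r (2*n+1-i) = mir (full n r i)"
  by (auto simp: full_def)

lemma wd_full: "length r = n \<Longrightarrow> wd (full n r) n = r"
proof -
  assume l: "length r = n"
  have "wd (full n r) n = wd (hw n r) n" by (rule wd_cong) (simp add: full_def)
  then show ?thesis using wd_hw[OF l, of n] by simp
qed

lemma goodw_full:
  assumes r: "r \<in> W n"
  shows "goodw (2*n) (full n r)"
proof -
  let ?w = "full n r"
  have l: "length r = n" and v: "valid r" using r by (auto simp: W_def)
  have v': "valid (wd ?w n)" using wd_full[OF l] v by simp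
  then have h1: "\<And>i. i \<le> n \<Longrightarrow> lv ?w i \<ge> 0" and h2: "\<And>i. 1 \<le> i \<Longrightarrow> i \<le> n \<Longrightarrow> ?w i = F \<Longrightarrow> lv ?w i = 0"
    unfolding valid_wd by auto
  have sym: "\<And>i. 1 \<le> i \<Longrightarrow> i \<le> 2*n \<Longrightarrow> ?w (2*n+1-i) = mir (?w i)" by (rule full_sym)
  have sU: "k \<le> 2*n \<Longrightarrow> cnt ?w U (2*n-k) + cnt ?w D k = cnt ?w U (2*n)" for k
    using cnt_sym[of "2*n" ?w, OF sym, of k U] by simp
  have sD: "k \<le> 2*n \<Longrightarrow> cnt ?w D (2*n-k) + cnt ?w U k = cnt ?w D (2*n)" for k
    using cnt_sym[of "2*n" ?w, OF sym, of k D] by simp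
  have G3: "cnt ?w U (2*n) = cnt ?w D (2*n)" using sU[of n] sD[of n] by (simp add: mult_2)
  have lvs: "k \<le> 2*n \<Longrightarrow> lv ?w (2*n-k) = lv ?w k" for k
    using sU[of k] sD[of k] G3 unfolding lv_def by linarith
  show ?thesis
  proof
    fix i assume i: "i \<le> 2*n"
    show "lv ?w i \<ge> 0"
    proof (cases "i \<le> n")
      case True then show ?thesis using h1 by simp
    next
      case False
      then have "lv ?w i = lv ?w (2*n-i)" using lvs[of "2*n-i"] i by simp
      then show ?thesis using h1[of "2*n-i"] False i by simp
    qed
  next
    fix i assume i: "1 \<le> i" "i \<le> 2*n" "?w i = F"
    show "lv ?w i = 0"
    proof (cases "i \<le> n")
      case True then show ?thesis using h2 i by simp
    next
      case False
      define k where "k = 2*n+1-i"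
      have k: "1 \<le> k" "k \<le> n" using False i by (auto simp: k_def)
      have wk: "?w k = F" using sym[of i] i by (simp add: k_def)
      have "lv ?w k = 0" using h2 k wk by simp
      moreover have "lv ?w k = lv ?w (k-1)" using lv_Suc[of ?w "k-1"] k wk by simp
      moreover have "lv ?w i = lv ?w (k-1)" using lvs[of "k-1"] k i by (simp add: k_def)
      ultimately show ?thesis by simp
    qed
  next
    show "cnt ?w U (2*n) = cnt ?w D (2*n)" by (rule G3)
  qed
qed



lemma cent_pinv: "p \<in> cent_inv_321 m \<Longrightarrow> pinv m p"
  by unfold_locales (auto simp: cent_inv_321_def)

lemma sg_sym:
  assumes "p \<in> cent_inv_321 m" "1 \<le> i" "i \<le> m"
  shows "sg p (m+1-i) = mir (sg p i)"
proof -
  have perm: "p permutes {1..m}" and c: "p i + p (m+1-i) = m+1"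
    using assms by (auto simp: cent_inv_321_def centrosymmetric_def)
  have "p i \<in> {1..m}" using permutes_in_image[OF perm] assms by auto
  then show ?thesis using c assms by (auto simp: sg_def)
qed

lemma des_eq:
  assumes p: "p \<in> cent_inv_321 (2*n)" and n: "n \<ge> 1"
  shows "des (2*n) p = wt (wd (sg p) n)"
proof -
  interpret pinv "2*n" p by (rule cent_pinv[OF p])
  have "{i. 1 \<le> i \<and> i \<le> 2*n - 1 \<and> p i > p (i+1)} = {i. 1 \<le> i \<and> Suc i \<le> 2*n \<and> sg p i = U \<and> sg p (Suc i) = D}"
    using desc by auto
  then have "des (2*n) p = card {i. 1 \<le> i \<and> Suc i \<le> 2*n \<and> sg p i = U \<and> sg p (Suc i) = D}"
    by (simp add: des_def)
  also have "\<dots> = 2 * card {i. 1 \<le> i \<and> Suc i \<le> n \<and> sg p i = U \<and> sg p (Suc i) = D} + (if sg p n = U then 1 else 0)"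
    by (rule pk_sym) (use sg_sym[OF p] n in auto)
  also have "\<dots> = wt (wd (sg p) n)"
    using n by (simp add: wt_def pk_wd lastU_wd)
  finally show ?thesis .
qed

lemma bij:
  "bij_betw (\<lambda>p. wd (sg p) n) (cent_inv_321 (2*n)) (W n)"
  unfolding bij_betw_def
proof (intro conjI)
  show "inj_on (\<lambda>p. wd (sg p) n) (cent_inv_321 (2*n))"
  proof (rule inj_onI)
    fix p s assume p: "p \<in> cent_inv_321 (2*n)" and s: "s \<in> cent_inv_321 (2*n)"
      and e: "wd (sg p) n = wd (sg s) n"
    have lo: "sg p k = sg s k" if "1 \<le> k" "k \<le> n" for k using wd_inj[OF e] that by simp
    have all: "sg p k = sg s k" for k
    proof -
      consider "1 \<le> k \<and> k \<le> n" | "n < k \<and> k \<le> 2*n" | "k = 0 \<or> k > 2*n" by linarith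
      then show ?thesis
      proof cases
        case 1 then show ?thesis using lo by simp
      next
        case 2
        define k' where "k' = 2*n+1-k"
        have k': "1 \<le> k'" "k' \<le> n" "k = 2*n+1-k'" using 2 by (auto simp: k'_def)
        then show ?thesis using sg_sym[OF p, of k'] sg_sym[OF s, of k'] lo[of k'] by simp
      next
        case 3
        have "p k = k" "s k = k"
          using p s permutes_not_in[of p "{1..2*n}" k] permutes_not_in[of s "{1..2*n}" k] 3
          by (auto simp: cent_inv_321_def)
        then show ?thesis by (simp add: sg_def)
      qed
    qed
    show "p = s" by (rule uniq[OF cent_pinv[OF p] cent_pinv[OF s] all])
  qed
next
  show "(\<lambda>p. wd (sg p) n) ` cent_inv_321 (2*n) = W n"
  proof (intro equalityI subsetI)
    fix r assume "r \<in> (\<lambda>p. wd (sg p) n) ` cent_inv_321 (2*n)"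
    then obtain p where p: "p \<in> cent_inv_321 (2*n)" "r = wd (sg p) n" by auto
    interpret pinv "2*n" p by (rule cent_pinv[OF p(1)])
    show "r \<in> W n" using p valid_sg by (simp add: W_def)
  next
    fix r assume r: "r \<in> W n"
    interpret G: goodw "2*n" "full n r" by (rule goodw_full[OF r])
    have l: "length r = n" using r by (simp add: W_def)
    have mem: "G.mt \<in> cent_inv_321 (2*n)"
      unfolding cent_inv_321_def using G.mt_permutes G.mt_inv G.mt_avoids G.centro[OF full_sym] by simp
    have "wd (sg G.mt) n = wd (full n r) n" by (rule wd_cong) (simp add: G.sg_mt)
    then have "wd (sg G.mt) n = r" using wd_full[OF l] by simp
    then show "r \<in> (\<lambda>p. wd (sg p) n) ` cent_inv_321 (2*n)" using mem by force
  qed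
qed

theorem mainTheorem3:
  fixes n :: nat and q :: "'a :: comm_ring_1"
  assumes "n \<ge> 1"
  shows "(\<Sum>p\<in>cent_inv_321 (2 * n). q ^ des (2 * n) p) = (1 + q) ^ n"
proof -
  have "(\<Sum>p\<in>cent_inv_321 (2 * n). q ^ des (2 * n) p) = (\<Sum>p\<in>cent_inv_321 (2 * n). q ^ wt (wd (sg p) n))"
    by (rule sum.cong) (simp_all add: des_eq[OF _ assms])
  also have "\<dots> = (\<Sum>r\<in>W n. q ^ wt r)"
    by (rule sum.reindex_bij_betw[OF bij])
  also have "\<dots> = (1 + q) ^ n" by (rule count_W)
  finally show ?thesis .
qed

end
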